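(* Fix $L\ge20$. For any pattern $(\mathbf a,\mathbf e)$ there exists $S\subseteq V(\Gamma)$ such that $p_{\mathrm{LD}}((\mathbf a,\mathbf e)_S)\ge p_{\mathrm{LD}}(\mathbf a,\mathbf e)-30L\sqrt d$ and, for all $(i,w)\in S$, \[\sum_{(i',w')\in N_{\Gamma_{\mathrm{LD}}}(i,w)\cap S}\frac{a_{i,w}a_{i',w'}}{n}\Big(1+\frac{\epsilon_{i,w,i',w'}}2\Big)\log(1+\epsilon_{i,w,i',w'})\ge\frac L4\,a_{i,w}\log\Big(\frac{en}{a_{i,w}}\Big),\] where the right side is interpreted as $0$ when $a_{i,w}=0$.
   Context: $d\ge2$, $H$ is a $d$-regular graph on $[h]$. $D^{>0}=\{2^k/\sqrt{nh}:k\in\mathbb{Z},k\ge0\}$; $\Gamma$ is the graph on $[h]\times D^{>0}$ with $(i,w)\sim_\Gamma(i',w')$ iff $ii'\in E(H)$ and $w/w'\in(d^{-1/2},d^{1/2})$. A pattern is $(\mathbf a,\mathbf e)$: nonnegative integers $a_{i,w}$ with $\sum_wa_{i,w}\le n$ for each $i$, $\sum w^2a_{i,w}\le10$, some $w_0\in D^{>0}$ with $a_{i,w}=0$ unless $w_0\le w\le dw_0$; integers $e_{i,w,i',w'}$ for edges of $\Gamma$ (symmetric) with $0\le e\le\min(a_{i,w},a_{i',w'})$. Sub-pattern $(\mathbf a,\mathbf e)_S$: keep $a_{i,w}$ for $(i,w)\in S$ (else $0$) and $e$ on edges inside $S$ (else $0$). $\epsilon_{i,w,i',w'}=e_{i,w,i',w'}n/(a_{i,w}a_{i',w'})-1$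 if $a_{i,w},a_{i',w'}\ne0$, and $=1$ otherwise. $\Gamma_{\mathrm{LD}}=\Gamma_{\mathrm{LD}}(\mathbf a,\mathbf e)$ is the spanning subgraph of $\Gamma$ consisting of the edges with $\epsilon_{i,w,i',w'}>e^2-1$, and $p_{\mathrm{LD}}(\mathbf a,\mathbf e)=\big|\sum_{(i,w)(i',w')\in E(\Gamma_{\mathrm{LD}})}\frac{ww'a_{i,w}a_{i',w'}}{n}\epsilon_{i,w,i',w'}\big|$ (with $\Gamma_{\mathrm{LD}}$ determined by the pattern in question). *)

theory Defs
  imports Complex_Main
begin

type_synonym vtx = "nat \<times> real"

definition Dpos :: "nat \<Rightarrow> nat \<Rightarrow> real set" where
  "Dpos n h = {2 ^ k / sqrt (real n * real h) | k :: nat. True}"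

definition Gvert :: "nat \<Rightarrow> nat \<Rightarrow> vtx set" where
  "Gvert n h = {(i, w). i \<in> {1..h} \<and> w \<in> Dpos n h}"

definition regular_graph :: "(nat \<Rightarrow> nat \<Rightarrow> bool) \<Rightarrow> nat \<Rightarrow> nat \<Rightarrow> bool" where
  "regular_graph Hadj h d \<longleftrightarrow>
     (\<forall>i j. Hadj i j \<longrightarrow> i \<in> {1..h} \<and> j \<in> {1..h} \<and> i \<noteq> j \<and> Hadj j i) \<and>
     (\<forall>i \<in> {1..h}. card {j. Hadj i j} = d)"

definition Gadj :: "(nat \<Rightarrow> nat \<Rightarrow> bool) \<Rightarrow> nat \<Rightarrow> nat \<Rightarrow> nat \<Rightarrow> vtx \<Rightarrow> vtx \<Rightarrow> bool" where
  "Gadj Hadj d n h x y \<longleftrightarrow>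
     x \<in> Gvert n h \<and> y \<in> Gvert n h \<and> Hadj (fst x) (fst y) \<and>
     inverse (sqrt (real d)) < snd x / snd y \<and> snd x / snd y < sqrt (real d)"

text \<open>Patterns. a is extended by 0 outside V(Gamma); e only matters on edges of Gamma.\<close>
definition is_pattern ::
  "(nat \<Rightarrow> nat \<Rightarrow> bool) \<Rightarrow> nat \<Rightarrow> nat \<Rightarrow> nat \<Rightarrow> (vtx \<Rightarrow> nat) \<Rightarrow> (vtx \<Rightarrow> vtx \<Rightarrow> nat) \<Rightarrow> bool" where
  "is_pattern Hadj d n h a e \<longleftrightarrow>
     (\<forall>x. x \<notin> Gvert n h \<longrightarrow> a x = 0) \<and>
     (\<exists>w0 \<in> Dpos n h. \<forall>i w. a (i, w) \<noteq> 0 \<longrightarrow> w0 \<le> w \<and> w \<le> real d * w0) \<and>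
     (\<forall>i. (\<Sum>w | a (i, w) \<noteq> 0. a (i, w)) \<le> n) \<and>
     (\<Sum>x | a x \<noteq> 0. (snd x)\<^sup>2 * real (a x)) \<le> 10 \<and>
     (\<forall>x y. Gadj Hadj d n h x y \<longrightarrow> e x y = e y x \<and> e x y \<le> min (a x) (a y))"

definition sub_a :: "vtx set \<Rightarrow> (vtx \<Rightarrow> nat) \<Rightarrow> vtx \<Rightarrow> nat" where
  "sub_a S a = (\<lambda>x. if x \<in> S then a x else 0)"

definition sub_e :: "vtx set \<Rightarrow> (vtx \<Rightarrow> vtx \<Rightarrow> nat) \<Rightarrow> vtx \<Rightarrow> vtx \<Rightarrow> nat" where
  "sub_e S e = (\<lambda>x y. if x \<in> S \<and> y \<in> S then e x y else 0)"

definition eps :: "nat \<Rightarrow> (vtx \<Rightarrow> nat) \<Rightarrow> (vtx \<Rightarrow> vtx \<Rightarrow> nat) \<Rightarrow> vtx \<Rightarrow> vtx \<Rightarrow> real" where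
  "eps n a e x y =
     (if a x \<noteq> 0 \<and> a y \<noteq> 0 then real (e x y) * real n / (real (a x) * real (a y)) - 1 else 1)"

definition LDadj ::
  "(nat \<Rightarrow> nat \<Rightarrow> bool) \<Rightarrow> nat \<Rightarrow> nat \<Rightarrow> nat \<Rightarrow> (vtx \<Rightarrow> nat) \<Rightarrow> (vtx \<Rightarrow> vtx \<Rightarrow> nat) \<Rightarrow> vtx \<Rightarrow> vtx \<Rightarrow> bool" where
  "LDadj Hadj d n h a e x y \<longleftrightarrow> Gadj Hadj d n h x y \<and> eps n a e x y > (exp 1)\<^sup>2 - 1"

text \<open>p_LD: sum over (unordered) edges of Gamma_LD, written as half the sum over ordered
  adjacent pairs (the summand is symmetric and Gamma is loopless).\<close>
definition pLD ::
  "(nat \<Rightarrow> nat \<Rightarrow> bool) \<Rightarrow> nat \<Rightarrow> nat \<Rightarrow> nat \<Rightarrow> (vtx \<Rightarrow> nat) \<Rightarrow> (vtx \<Rightarrow> vtx \<Rightarrow> nat) \<Rightarrow> real" where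
  "pLD Hadj d n h a e =
     \<bar>(1/2) * (\<Sum>(x, y) \<in> {(x, y). LDadj Hadj d n h a e x y}.
        snd x * snd y * real (a x) * real (a y) / real n * eps n a e x y)\<bar>"

end

theory Submission
  imports Defs
begin

lemma sq_le_exp: "(x::real) \<ge> 0 \<Longrightarrow> x\<^sup>2 \<le> 16 * exp (x / 2)"
proof -
  assume x: "x \<ge> 0"
  have "x/4 \<le> exp (x/4)" using exp_ge_add_one_self[of "x/4"] by linarith
  then have "(x/4)\<^sup>2 \<le> (exp (x/4))\<^sup>2" using x by (intro power_mono) auto
  also have "(exp (x/4))\<^sup>2 = exp (x/2)" by (simp add: power2_eq_square flip: exp_add)
  finally show ?thesis by (simp add: power_divide)
qed

lemma edge_ineq:
  fixes w v a b n E d r K :: real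
  assumes pos: "a > 0" "b > 0" "n > 0" "w > 0" "v > 0" "d > 0"
    and Ea: "E \<le> a" and Eb: "E \<le> b"
    and rdef: "r = E * n / (a * b)" and rbig: "r > (exp 1)\<^sup>2"
    and rho: "v / w < sqrt d"
    and Kdef: "K = ln (exp 1 * n / a)"
  shows "w * v * (a * b / n) * (r - 1) \<le> 2 * sqrt d * w\<^sup>2 * E * ln r / K
          + (if ln r < K / 2 \<and> v / w > sqrt d * ln r / K then v\<^sup>2 * E * K / (2 * sqrt d * ln r) else 0)"
    and "K > 0" "ln r > 2" "ln r < K"
    and "a * b / n * (1 + (r - 1) / 2) * ln r \<ge> E * ln r / 2"
proof -
  have rpos: "r > 0" using rbig by (smt (verit) zero_less_power exp_gt_zero)
  have lr2: "ln r > 2"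
  proof -
    have "(exp (1::real))\<^sup>2 = exp 2" by (simp add: power2_eq_square flip: exp_add)
    then have "ln ((exp (1::real))\<^sup>2) = 2" by simp
    moreover have "ln ((exp 1)\<^sup>2) < ln r" using rbig rpos by (subst ln_less_cancel_iff) auto
    ultimately show ?thesis by simp
  qed
  then show "ln r > 2" .
  have rle: "r \<le> n / a"
  proof -
    have "E * n \<le> b * n" using Eb pos by (intro mult_right_mono) auto
    then have "E * n / (a * b) \<le> b * n / (a * b)" using pos by (intro divide_right_mono) auto
    also have "\<dots> = n / a" using pos by simp
    finally show ?thesis using rdef by simp
  qed
  have "ln r \<le> ln (n / a)" using rle rpos by (subst ln_le_cancel_iff) auto
  also have "ln (n / a) < K"
  proof -
    have "n / a < exp 1 * n / a" using pos by (simp add: divide_strict_right_mono)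
    then show ?thesis unfolding Kdef using pos by (subst ln_less_cancel_iff) auto
  qed
  finally show lrK: "ln r < K" .
  then show Kpos: "K > 0" using lr2 by simp
  have Er: "E = r * (a * b / n)" using rdef pos by simp
  have Epos: "E > 0" using Er rpos pos by simp
  show "a * b / n * (1 + (r - 1) / 2) * ln r \<ge> E * ln r / 2"
  proof -
    have "E * ln r / 2 = a * b / n * (r / 2) * ln r" using Er by simp
    also have "\<dots> \<le> a * b / n * (1 + (r - 1) / 2) * ln r"
    proof -
      have "r / 2 \<le> 1 + (r - 1) / 2" by (simp add: field_simps)
      then show ?thesis using pos lr2 by (intro mult_right_mono mult_left_mono) auto
    qed
    finally show ?thesis .
  qed
  have sd: "sqrt d > 0" using pos by simp
  define rho where "rho = v / w"
  have vw: "v = rho * w" using pos unfolding rho_def by simp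
  have rhop: "rho > 0" using pos unfolding rho_def by simp
  have main: "w * v * (a * b / n) * (r - 1) \<le> rho * w\<^sup>2 * E"
  proof -
    have "w * v * (a * b / n) * (r - 1) \<le> w * v * (a * b / n) * r"
      using pos by (intro mult_left_mono) auto
    also have "\<dots> = rho * w\<^sup>2 * E" using Er vw by (simp add: power2_eq_square)
    finally show ?thesis .
  qed
  define lam where "lam = sqrt d * ln r / K"
  have lamp: "lam > 0" using sd lr2 Kpos unfolding lam_def by simp
  show "w * v * (a * b / n) * (r - 1) \<le> 2 * sqrt d * w\<^sup>2 * E * ln r / K
          + (if ln r < K / 2 \<and> v / w > sqrt d * ln r / K then v\<^sup>2 * E * K / (2 * sqrt d * ln r) else 0)"
  proof (cases "ln r < K / 2")
    case False
    have "rho * w\<^sup>2 * E \<le> sqrt d * w\<^sup>2 * E" using rho Epos unfolding rho_def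
      by (intro mult_right_mono) auto
    also have "\<dots> \<le> sqrt d * w\<^sup>2 * E * (2 * ln r / K)"
    proof -
      have "1 \<le> 2 * ln r / K" using False Kpos by (simp add: field_simps)
      moreover have "sqrt d * w\<^sup>2 * E > 0" using sd Epos pos by simp
      ultimately show ?thesis
        using mult_left_mono[of 1 "2 * ln r / K" "sqrt d * w\<^sup>2 * E"] by simp
    qed
    finally show ?thesis using main False by (simp add: field_simps)
  next
    case True
    show ?thesis
    proof (cases "rho > lam")
      case False
      have "rho * w\<^sup>2 * E \<le> lam * w\<^sup>2 * E" using False Epos by (intro mult_right_mono) auto
      also have "\<dots> \<le> 2 * sqrt d * w\<^sup>2 * E * ln r / K"
        unfolding lam_def using sd Epos lr2 Kpos pos
        by (simp add: field_simps)
      finally show ?thesis using main False unfolding rho_def lam_def by simp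
    next
      case rl: True
      have amgm: "w * v \<le> (lam * w\<^sup>2 + v\<^sup>2 / lam) / 2"
      proof -
        have "0 \<le> (lam * w - v)\<^sup>2" by simp
        then have "2 * lam * (w * v) \<le> lam\<^sup>2 * w\<^sup>2 + v\<^sup>2" by (simp add: power2_eq_square algebra_simps)
        then show ?thesis using lamp by (simp add: field_simps power2_eq_square)
      qed
      have "rho * w\<^sup>2 * E = (w * v) * E" using vw by (simp add: power2_eq_square)
      also have "\<dots> \<le> (lam * w\<^sup>2 + v\<^sup>2 / lam) / 2 * E" using amgm Epos by (intro mult_right_mono) auto
      also have "\<dots> = sqrt d * w\<^sup>2 * E * ln r / K / 2 + v\<^sup>2 * E * K / (2 * sqrt d * ln r)"
        unfolding lam_def using sd lr2 Kpos by (simp add: field_simps)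
      also have "\<dots> \<le> 2 * sqrt d * w\<^sup>2 * E * ln r / K + v\<^sup>2 * E * K / (2 * sqrt d * ln r)"
      proof -
        have nn: "0 \<le> sqrt d * w\<^sup>2 * E * ln r / K" using sd Epos lr2 Kpos by simp
        have eq: "2 * sqrt d * w\<^sup>2 * E * ln r / K = 2 * (sqrt d * w\<^sup>2 * E * ln r / K)" by simp
        have h: "\<And>X Y::real. 0 \<le> X \<Longrightarrow> X/2 + Y \<le> 2*X + Y" by linarith
        show ?thesis by (subst eq) (rule h[OF nn])
      qed
      finally show ?thesis using main True rl unfolding rho_def lam_def by simp
    qed
  qed
qed

lemma B_ineq:
  fixes w v a b n E d r K :: real
  assumes pos: "a > 0" "b > 0" "n > 0" "w > 0" "v > 0" "d > 0"
    and rdef: "r = E * n / (a * b)" and rbig: "r > (exp 1)\<^sup>2"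
    and Kdef: "K = ln (exp 1 * n / a)"
    and c1: "ln r < K / 2" and c2: "v / w > sqrt d * ln r / K"
    and lr2: "ln r > 2" and Kpos: "K > 0"
  shows "v\<^sup>2 * E * K / (2 * sqrt d * ln r) \<le> 2 * exp 1 * v\<^sup>2 * b * (v / w) / d"
proof -
  have rpos: "r > 0" using rbig by (smt (verit) zero_less_power exp_gt_zero)
  have sd: "sqrt d > 0" using pos by simp
  define rho where "rho = v / w"
  have rhop: "rho > 0" using pos unfolding rho_def by simp
  have Er: "E = r * (a * b / n)" using rdef pos by simp
  have Epos: "E > 0" using Er rpos pos by simp
  have expK: "exp K = exp 1 * n / a" unfolding Kdef using pos by simp
  have an: "a / n = exp (1 - K)"
    using expK pos by (simp add: exp_diff field_simps)
  have rlt: "r < exp (K / 2)" using c1 rpos by (metis exp_less_cancel_iff exp_ln)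
  have Elt: "E \<le> b * exp (1 - K / 2)"
  proof -
    have "E = r * (a / n) * b" using Er by simp
    also have "\<dots> \<le> exp (K / 2) * (a / n) * b" using rlt pos by (intro mult_right_mono) auto
    also have "\<dots> = b * exp (1 - K / 2)" using an by (simp add: mult.commute flip: exp_add)
    finally show ?thesis .
  qed
  have step1: "v\<^sup>2 * E * K / (2 * sqrt d * ln r) \<le> v\<^sup>2 * E * K / (4 * sqrt d)"
  proof -
    have "2 * sqrt d * 2 \<le> 2 * sqrt d * ln r" using lr2 sd by (intro mult_left_mono) auto
    then have "4 * sqrt d \<le> 2 * sqrt d * ln r" by simp
    moreover have "v\<^sup>2 * E * K \<ge> 0" using Epos Kpos by simp
    ultimately show ?thesis using sd by (intro divide_left_mono) auto
  qed
  have step2: "v\<^sup>2 * E * K / (4 * sqrt d) \<le> v\<^sup>2 * b * (K * exp (1 - K / 2)) / (4 * sqrt d)"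
  proof -
    have "v\<^sup>2 * E * K \<le> v\<^sup>2 * (b * exp (1 - K / 2)) * K"
      using Elt Kpos pos by (intro mult_right_mono mult_left_mono) auto
    then show ?thesis using sd by (intro divide_right_mono) (auto simp: ac_simps)
  qed
  have kb: "K * exp (1 - K / 2) \<le> 16 * exp 1 / K"
  proof -
    have "K\<^sup>2 \<le> 16 * exp (K / 2)" using sq_le_exp[of K] Kpos by simp
    then have "K\<^sup>2 * exp (1 - K / 2) \<le> 16 * exp (K / 2) * exp (1 - K / 2)"
      by (intro mult_right_mono) auto
    also have "\<dots> = 16 * exp 1" by (simp flip: exp_add)
    finally have "K * K * exp (1 - K / 2) \<le> 16 * exp 1" by (simp add: power2_eq_square)
    then show ?thesis using Kpos by (simp add: field_simps)
  qed
  have Kinv: "1 / K \<le> rho / (2 * sqrt d)"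
  proof -
    have "sqrt d * 2 \<le> sqrt d * ln r" using lr2 sd by (intro mult_left_mono) auto
    then have "sqrt d * 2 / K \<le> sqrt d * ln r / K" using Kpos by (intro divide_right_mono) auto
    also have "\<dots> < rho" using c2 unfolding rho_def .
    finally have "sqrt d * 2 / K < rho" .
    then show ?thesis using sd Kpos by (simp add: field_simps)
  qed
  have "v\<^sup>2 * b * (K * exp (1 - K / 2)) / (4 * sqrt d) \<le> v\<^sup>2 * b * (16 * exp 1 / K) / (4 * sqrt d)"
    using kb pos sd by (intro divide_right_mono mult_left_mono) auto
  also have "\<dots> = 4 * exp 1 * v\<^sup>2 * b / sqrt d * (1 / K)" by (simp add: field_simps)
  also have "\<dots> \<le> 4 * exp 1 * v\<^sup>2 * b / sqrt d * (rho / (2 * sqrt d))"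
    using Kinv pos sd by (intro mult_left_mono) auto
  also have "\<dots> = 2 * exp 1 * v\<^sup>2 * b * rho / d"
    using sd pos by (simp add: field_simps)
  finally show ?thesis using step1 step2 unfolding rho_def by simp
qed

lemma geom_interval: "(\<Sum>k\<in>{m..<m+t}. (1/2::real)^k) = 2 * (1/2)^m - 2 * (1/2)^(m+t)"
proof (induction t)
  case 0 then show ?case by simp
next
  case (Suc t)
  have "{m..<m + Suc t} = insert (m + t) {m..<m + t}" by auto
  then have "(\<Sum>k\<in>{m..<m+Suc t}. (1/2::real)^k) = (1/2)^(m+t) + (\<Sum>k\<in>{m..<m+t}. (1/2::real)^k)"
    by simp
  also have "\<dots> = (1/2)^(m+t) + 2 * (1/2)^m - 2 * (1/2)^(m+t)" using Suc by simp
  also have "\<dots> = 2 * (1/2)^m - 2 * (1/2)^(m + Suc t)" by simp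
  finally show ?case .
qed

lemma geom_subset:
  assumes "finite Ks" "Ks \<subseteq> {m..}"
  shows "(\<Sum>k\<in>Ks. (1/2::real)^k) \<le> 2 * (1/2)^m"
proof -
  obtain N where N: "\<forall>k\<in>Ks. k < N" using assms(1) finite_nat_set_iff_bounded by auto
  have sub: "Ks \<subseteq> {m..<m + N}" using N assms(2) by fastforce
  have "(\<Sum>k\<in>Ks. (1/2::real)^k) \<le> (\<Sum>k\<in>{m..<m+N}. (1/2::real)^k)"
    by (rule sum_mono2) (use sub in auto)
  also have "\<dots> \<le> 2 * (1/2)^m" unfolding geom_interval by simp
  finally show ?thesis .
qed

locale P5 =
  fixes Hadj :: "nat \<Rightarrow> nat \<Rightarrow> bool" and d n h :: nat and L :: real
    and a :: "vtx \<Rightarrow> nat" and e :: "vtx \<Rightarrow> vtx \<Rightarrow> nat"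
  assumes d2: "d \<ge> 2" and reg: "regular_graph Hadj h d" and L20: "L \<ge> 20"
    and pat: "is_pattern Hadj d n h a e"
begin

abbreviation "LD \<equiv> LDadj Hadj d n h a e"

lemma Dpos_pos: "w \<in> Dpos n h \<Longrightarrow> n > 0 \<Longrightarrow> h > 0 \<Longrightarrow> w > 0"
  by (auto simp: Dpos_def)

lemma LD_basic:
  assumes "LD x y"
  shows "a x > 0" "a y > 0" "n > 0" "h > 0" "x \<in> Gvert n h" "y \<in> Gvert n h"
    "snd x > 0" "snd y > 0" "e x y \<le> a x" "e x y \<le> a y" "e x y = e y x"
    "Hadj (fst x) (fst y)" "snd y / snd x < sqrt d" "fst x \<noteq> fst y"
    "eps n a e x y = real (e x y) * real n / (real (a x) * real (a y)) - 1"
    "eps n a e x y > exp 1 ^ 2 - 1"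
proof -
  have G: "Gadj Hadj d n h x y" and ep: "eps n a e x y > (exp 1)\<^sup>2 - 1"
    using assms by (auto simp: LDadj_def)
  have e2: "(exp 1)\<^sup>2 - 1 > (1::real)"
  proof -
    have "exp (1::real) \<ge> 2" using exp_ge_add_one_self[of 1] by simp
    then have "(exp (1::real))\<^sup>2 \<ge> 2\<^sup>2" by (intro power_mono) auto
    then show ?thesis by simp
  qed
  show ax: "a x > 0" and ay: "a y > 0" using ep e2 by (auto simp: eps_def split: if_splits)
  show "eps n a e x y = real (e x y) * real n / (real (a x) * real (a y)) - 1"
    using ax ay by (simp add: eps_def)
  show "eps n a e x y > exp 1 ^ 2 - 1" using ep .
  show xG: "x \<in> Gvert n h" and yG: "y \<in> Gvert n h" and H: "Hadj (fst x) (fst y)"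
    using G by (auto simp: Gadj_def)
  show "n > 0"
  proof (rule ccontr)
    assume "\<not> n > 0" then have "n = 0" by simp
    then show False using ep ax ay e2 by (simp add: eps_def)
  qed
  then show "h > 0" using xG by (auto simp: Gvert_def)
  show "snd x > 0" "snd y > 0" using xG yG \<open>n>0\<close> \<open>h>0\<close> Dpos_pos by (auto simp: Gvert_def)
  have "e x y = e y x \<and> e x y \<le> min (a x) (a y)" using pat G unfolding is_pattern_def by blast
  then show "e x y \<le> a x" "e x y \<le> a y" "e x y = e y x" by auto
  show "fst x \<noteq> fst y" using reg H by (auto simp: regular_graph_def)
  show "snd y / snd x < sqrt d"
  proof -
    have "inverse (sqrt (real d)) < snd x / snd y" using G by (simp add: Gadj_def)
    moreover have "snd x > 0" "snd y > 0" using xG yG \<open>n>0\<close> \<open>h>0\<close> Dpos_pos by (auto simp: Gvert_def)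
    moreover have "sqrt (real d) > 0" using d2 by simp
    ultimately show ?thesis by (simp add: field_simps)
  qed
qed

lemma LD_sym: assumes "LD x y" shows "LD y x"
proof -
  note b = LD_basic[OF assms]
  have G: "Gadj Hadj d n h x y" using assms by (simp add: LDadj_def)
  have Hs: "Hadj (fst y) (fst x)" using reg b(12) by (auto simp: regular_graph_def)
  have sd: "sqrt (real d) > 0" using d2 by simp
  have r1: "inverse (sqrt (real d)) < snd x / snd y" "snd x / snd y < sqrt (real d)"
    using G by (auto simp: Gadj_def)
  have "inverse (sqrt (real d)) < snd y / snd x"
  proof -
    have "snd x < sqrt d * snd y" using r1(2) b(8) by (simp add: field_simps)
    then show ?thesis using b(7) b(8) sd by (simp add: field_simps)
  qed
  moreover have "snd y / snd x < sqrt (real d)" using b(13) .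
  ultimately have G': "Gadj Hadj d n h y x" using b(5,6) Hs unfolding Gadj_def by blast
  have "eps n a e y x = eps n a e x y" using b(11) unfolding eps_def by (simp add: mult.commute[of "real (a x)"])
  then show ?thesis using G' b(16) by (simp add: LDadj_def)
qed

definition "V = {x. a x \<noteq> 0}"

lemma V_fin: "finite V"
proof -
  obtain w0 where w0: "w0 \<in> Dpos n h" and wr: "\<forall>i w. a (i, w) \<noteq> 0 \<longrightarrow> w0 \<le> w \<and> w \<le> real d * w0"
    using pat unfolding is_pattern_def by blast
  have out: "\<forall>x. x \<notin> Gvert n h \<longrightarrow> a x = 0" using pat unfolding is_pattern_def by blast
  define s where "s = sqrt (real n * real h)"
  define M where "M = nat \<lceil>real d * w0 * s\<rceil>"
  have "V \<subseteq> {1..h} \<times> ((\<lambda>k::nat. 2 ^ k / s) ` {..M})"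
  proof
    fix x assume "x \<in> V"
    then have ax: "a x \<noteq> 0" by (simp add: V_def)
    obtain i w where x: "x = (i, w)" by (cases x)
    have xG: "x \<in> Gvert n h" using out ax by (meson)
    then have i: "i \<in> {1..h}" and wD: "w \<in> Dpos n h" using x by (auto simp: Gvert_def)
    obtain k where k: "w = 2 ^ k / s" using wD by (auto simp: Dpos_def s_def)
    have wle: "w \<le> real d * w0" using wr ax x by auto
    show "x \<in> {1..h} \<times> ((\<lambda>k::nat. 2 ^ k / s) ` {..M})"
    proof (cases "s = 0")
      case True
      then have "w = 2 ^ 0 / s" using k by simp
      then have "w \<in> (\<lambda>k::nat. 2 ^ k / s) ` {..M}" by (intro image_eqI[of _ _ 0]) auto
      then show ?thesis using x i by simp
    next
      case False
      then have sp: "s > 0" by (simp add: s_def)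
      have "2 ^ k \<le> real d * w0 * s" using wle k sp by (simp add: field_simps)
      moreover have "real k < 2 ^ k"
      proof -
        have "k < 2 ^ k" by (rule less_exp)
        then have "real k < real (2 ^ k)" by linarith
        then show ?thesis by simp
      qed
      ultimately have "real k \<le> real d * w0 * s" by linarith
      then have "k \<le> M" unfolding M_def by linarith
      then have "w \<in> (\<lambda>k::nat. 2 ^ k / s) ` {..M}" using k by (intro image_eqI[of _ _ k]) auto
      then show ?thesis using x i by simp
    qed
  qed
  moreover have "finite ({1..h} \<times> ((\<lambda>k::nat. 2 ^ k / s) ` {..M}))" by auto
  ultimately show ?thesis by (rule finite_subset)
qed

lemma LD_V: "LD x y \<Longrightarrow> x \<in> V \<and> y \<in> V"
  using LD_basic(1,2) by (auto simp: V_def)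

end

lemma Dpos_ratio_sum:
  fixes d :: nat
  assumes np: "n > 0" "h > 0" and fW: "finite W" and WD: "W \<subseteq> Dpos n h" and vD: "v \<in> Dpos n h"
    and rat: "\<forall>w\<in>W. v / w < sqrt (real d)"
  shows "(\<Sum>w\<in>W. v / w) \<le> 2 * sqrt (real d)"
proof (cases "W = {}")
  case True then show ?thesis by simp
next
  case False
  define s where "s = sqrt (real n * real h)"
  have sp: "s > 0" using np by (simp add: s_def)
  obtain kv where kv: "v = 2 ^ kv / s" using vD unfolding Dpos_def s_def by blast
  define kof where "kof w = (SOME k::nat. w = 2 ^ k / s)" for w
  have kofw: "w = 2 ^ kof w / s" if "w \<in> W" for w
  proof -
    have "\<exists>k::nat. w = 2 ^ k / s" using that WD unfolding Dpos_def s_def by blast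
    then show ?thesis unfolding kof_def by (rule someI_ex)
  qed
  have inj: "inj_on kof W"
  proof
    fix x y assume "x \<in> W" "y \<in> W" "kof x = kof y"
    then show "x = y" using kofw by metis
  qed
  have vw: "v / w = 2 ^ kv * (1/2) ^ kof w" if "w \<in> W" for w
  proof -
    have "v / w = (2 ^ kv / s) / (2 ^ kof w / s)" using kofw[OF that] kv by simp
    also have "\<dots> = 2 ^ kv / 2 ^ kof w" using sp by simp
    also have "\<dots> = 2 ^ kv * (1/2) ^ kof w" by (simp add: power_one_over)
    finally show ?thesis .
  qed
  define Ks where "Ks = kof ` W"
  have fK: "finite Ks" "Ks \<noteq> {}" using fW False unfolding Ks_def by auto
  define m where "m = Min Ks"
  have mK: "m \<in> Ks" using fK unfolding m_def by simp
  then obtain w0 where w0: "w0 \<in> W" "kof w0 = m" unfolding Ks_def by auto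
  have Ksub: "Ks \<subseteq> {m..}" using fK unfolding m_def by auto
  have "(\<Sum>w\<in>W. v / w) = (\<Sum>w\<in>W. 2 ^ kv * (1/2::real) ^ kof w)"
    using vw by (intro sum.cong) auto
  also have "\<dots> = (\<Sum>k\<in>Ks. 2 ^ kv * (1/2::real) ^ k)"
    unfolding Ks_def using inj by (simp add: sum.reindex)
  also have "\<dots> = 2 ^ kv * (\<Sum>k\<in>Ks. (1/2::real) ^ k)" by (simp add: sum_distrib_left)
  also have "\<dots> \<le> 2 ^ kv * (2 * (1/2) ^ m)"
    using geom_subset[OF fK(1) Ksub] by (intro mult_left_mono) auto
  also have "\<dots> = 2 * (v / w0)" using vw[OF w0(1)] w0(2) by simp
  also have "\<dots> < 2 * sqrt (real d)" using rat w0(1) by (simp only: mult_less_cancel_left_pos[of 2])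
  finally show ?thesis by simp
qed

context P5 begin

definition tm :: "vtx \<Rightarrow> vtx \<Rightarrow> real" where
  "tm x y = snd x * snd y * real (a x) * real (a y) / real n * eps n a e x y"
definition gg :: "vtx \<Rightarrow> vtx \<Rightarrow> real" where
  "gg x y = real (a x) * real (a y) / real n * (1 + eps n a e x y / 2) * ln (1 + eps n a e x y)"
definition rr :: "vtx \<Rightarrow> vtx \<Rightarrow> real" where
  "rr x y = real (e x y) * real n / (real (a x) * real (a y))"
definition KK :: "vtx \<Rightarrow> real" where
  "KK x = ln (exp 1 * real n / real (a x))"
definition BB :: "vtx \<Rightarrow> vtx \<Rightarrow> real" where
  "BB x y = (if ln (rr x y) < KK x / 2 \<and> snd y / snd x > sqrt (real d) * ln (rr x y) / KK x
     then (snd y)\<^sup>2 * real (e x y) * KK x / (2 * sqrt (real d) * ln (rr x y)) else 0)"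

lemma edge:
  assumes "LD x y"
  shows "tm x y \<le> 4 * sqrt (real d) * (snd x)\<^sup>2 / KK x * gg x y + BB x y"
    and "KK x > 0" "gg x y \<ge> 0" "BB x y \<ge> 0"
    and "BB x y \<le> 2 * exp 1 * (snd y)\<^sup>2 * real (a y) * (snd y / snd x) / real d"
proof -
  note b = LD_basic[OF assms]
  have dp: "real d > 0" using d2 by simp
  have epsr: "eps n a e x y = rr x y - 1" using b(15) unfolding rr_def by simp
  have rbig: "rr x y > (exp 1)\<^sup>2" using b(16) epsr by simp
  note EI = edge_ineq[where w="snd x" and v="snd y" and a="real (a x)" and b="real (a y)"
      and n="real n" and E="real (e x y)" and d="real d" and r="rr x y" and K="KK x",
      OF _ _ _ _ _ dp _ _ rr_def rbig b(13) KK_def]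
  have pos: "real (a x) > 0" "real (a y) > 0" "real n > 0" "snd x > 0" "snd y > 0"
    using b by auto
  have Ea: "real (e x y) \<le> real (a x)" "real (e x y) \<le> real (a y)" using b(9,10) by auto
  note EI' = EI[OF pos Ea]
  show Kp: "KK x > 0" using EI'(2) .
  have lr2: "ln (rr x y) > 2" using EI'(3) .
  have tmeq: "tm x y = snd x * snd y * (real (a x) * real (a y) / real n) * (rr x y - 1)"
    unfolding tm_def epsr by simp
  have ggeq: "gg x y = real (a x) * real (a y) / real n * (1 + (rr x y - 1) / 2) * ln (rr x y)"
    unfolding gg_def epsr by simp
  have gE: "gg x y \<ge> real (e x y) * ln (rr x y) / 2" using EI'(5) ggeq by simp
  show "gg x y \<ge> 0"
  proof -
    have "real (e x y) * ln (rr x y) / 2 \<ge> 0" using lr2 by simp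
    then show ?thesis using gE by linarith
  qed
  show Bnn: "BB x y \<ge> 0" unfolding BB_def using lr2 Kp by simp
  have "tm x y \<le> 2 * sqrt (real d) * (snd x)\<^sup>2 * real (e x y) * ln (rr x y) / KK x + BB x y"
    unfolding tmeq BB_def by (rule EI'(1))
  also have "2 * sqrt (real d) * (snd x)\<^sup>2 * real (e x y) * ln (rr x y) / KK x
      = 4 * sqrt (real d) * (snd x)\<^sup>2 / KK x * (real (e x y) * ln (rr x y) / 2)" by simp
  also have "\<dots> \<le> 4 * sqrt (real d) * (snd x)\<^sup>2 / KK x * gg x y"
    using gE Kp by (intro mult_left_mono) auto
  finally show "tm x y \<le> 4 * sqrt (real d) * (snd x)\<^sup>2 / KK x * gg x y + BB x y" by simp
  show "BB x y \<le> 2 * exp 1 * (snd y)\<^sup>2 * real (a y) * (snd y / snd x) / real d"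
  proof (cases "ln (rr x y) < KK x / 2 \<and> snd y / snd x > sqrt (real d) * ln (rr x y) / KK x")
    case True
    then have "BB x y = (snd y)\<^sup>2 * real (e x y) * KK x / (2 * sqrt (real d) * ln (rr x y))"
      unfolding BB_def by (rule if_P)
    also have "\<dots> \<le> 2 * exp 1 * (snd y)\<^sup>2 * real (a y) * (snd y / snd x) / real d"
      using B_ineq[OF pos dp rr_def rbig KK_def _ _ lr2 Kp] True by simp
    finally show ?thesis .
  next
    case False
    then have "BB x y = 0" unfolding BB_def by (rule if_not_P)
    moreover have "0 \<le> 2 * exp 1 * (snd y)\<^sup>2 * real (a y) * (snd y / snd x) / real d"
      using pos by simp
    ultimately show ?thesis by simp
  qed
qed

definition "NB x = {y. LD x y}"
definition "rhs x = (if a x = 0 then 0 else L / 4 * real (a x) * ln (exp 1 * real n / real (a x)))"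
definition "cond T x \<longleftrightarrow> (\<Sum>y \<in> NB x \<inter> T. gg x y) \<ge> rhs x"
definition "beta x = (\<Sum>y\<in>NB x. BB x y)"

lemma NB_fin: "finite (NB x)"
  by (rule finite_subset[OF _ V_fin]) (auto simp: NB_def dest: LD_V)

lemma beta_nn: "beta x \<ge> 0"
  unfolding beta_def by (intro sum_nonneg) (auto simp: NB_def intro: edge(4))

lemma vertex:
  assumes xV: "x \<in> V" and nc: "\<not> cond T x"
  shows "(\<Sum>y\<in>NB x \<inter> T. tm x y) \<le> L * sqrt (real d) * (snd x)\<^sup>2 * real (a x) + beta x"
proof (cases "NB x \<inter> T = {}")
  case True
  have "0 \<le> L * sqrt (real d) * (snd x)\<^sup>2 * real (a x)" using L20 by simp
  then show ?thesis using True beta_nn by simp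
next
  case False
  then obtain y0 where "y0 \<in> NB x" by auto
  then have Kp: "KK x > 0" using edge(2) by (auto simp: NB_def)
  define c where "c = 4 * sqrt (real d) * (snd x)\<^sup>2 / KK x"
  have cnn: "c \<ge> 0" unfolding c_def using Kp by simp
  have fin: "finite (NB x \<inter> T)" using NB_fin by simp
  have "(\<Sum>y\<in>NB x \<inter> T. tm x y) \<le> (\<Sum>y\<in>NB x \<inter> T. c * gg x y + BB x y)"
  proof (intro sum_mono)
    fix y assume "y \<in> NB x \<inter> T"
    then have "LD x y" by (simp add: NB_def)
    then show "tm x y \<le> c * gg x y + BB x y" unfolding c_def by (rule edge(1))
  qed
  also have "\<dots> = c * (\<Sum>y\<in>NB x \<inter> T. gg x y) + (\<Sum>y\<in>NB x \<inter> T. BB x y)"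
    by (simp add: sum.distrib sum_distrib_left)
  also have "(\<Sum>y\<in>NB x \<inter> T. BB x y) \<le> beta x"
    unfolding beta_def using NB_fin by (intro sum_mono2) (auto simp: NB_def intro: edge(4))
  also have "c * (\<Sum>y\<in>NB x \<inter> T. gg x y) \<le> c * rhs x"
    using nc cnn unfolding cond_def by (intro mult_left_mono) auto
  also have "c * rhs x = L * sqrt (real d) * (snd x)\<^sup>2 * real (a x)"
    using xV Kp unfolding c_def rhs_def KK_def V_def by (simp add: field_simps)
  finally show ?thesis by simp
qed

end

context P5 begin

lemma eps_sym: "LD x y \<Longrightarrow> eps n a e y x = eps n a e x y"
  using LD_basic(1,2,11)[of x y] unfolding eps_def by (simp add: mult.commute[of "real (a x)"])

lemma tm_sym: "LD x y \<Longrightarrow> tm y x = tm x y"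
  unfolding tm_def using eps_sym by (simp add: ac_simps)

lemma tm_nn: "LD x y \<Longrightarrow> tm x y \<ge> 0"
proof -
  assume l: "LD x y"
  note b = LD_basic[OF l]
  have "(exp 1)\<^sup>2 - 1 \<ge> (0::real)"
  proof -
    have "exp (1::real) \<ge> 1" by simp
    then have "(exp (1::real))\<^sup>2 \<ge> 1" by (simp add: one_le_power)
    then show ?thesis by simp
  qed
  then have "eps n a e x y \<ge> 0" using b(16) by linarith
  then show ?thesis unfolding tm_def using b by simp
qed

lemma LD_irrefl: "\<not> LD x x"
  using LD_basic(14) by blast

definition "PS T = {(x, y). LD x y \<and> x \<in> T \<and> y \<in> T}"
definition "Q T = (\<Sum>(x, y)\<in>PS T. tm x y)"

lemma PS_fin: "finite (PS T)"
proof (rule finite_subset)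
  show "PS T \<subseteq> V \<times> V" unfolding PS_def using LD_V by auto
  show "finite (V \<times> V)" using V_fin by simp
qed

lemma Q_nn: "Q T \<ge> 0"
  unfolding Q_def PS_def by (intro sum_nonneg) (auto intro: tm_nn)

lemma Q_split:
  assumes xT: "x \<in> T"
  shows "Q T = Q (T - {x}) + 2 * (\<Sum>y\<in>NB x \<inter> T. tm x y)"
proof -
  define A where "A = NB x \<inter> T"
  have fA: "finite A" using NB_fin unfolding A_def by simp
  have PSeq: "PS T = PS (T - {x}) \<union> (Pair x ` A \<union> (\<lambda>y. (y, x)) ` A)"
    using xT unfolding PS_def A_def NB_def by (auto intro: LD_sym)
  have d1: "PS (T - {x}) \<inter> (Pair x ` A \<union> (\<lambda>y. (y, x)) ` A) = {}"
    unfolding PS_def by auto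
  have d2: "Pair x ` A \<inter> (\<lambda>y. (y, x)) ` A = {}"
    unfolding A_def NB_def using LD_irrefl by auto
  have s1: "(\<Sum>(u, v)\<in>Pair x ` A. tm u v) = (\<Sum>y\<in>A. tm x y)"
    by (subst sum.reindex) (auto intro: inj_onI)
  have s2: "(\<Sum>(u, v)\<in>(\<lambda>y. (y, x)) ` A. tm u v) = (\<Sum>y\<in>A. tm x y)"
  proof -
    have "(\<Sum>(u, v)\<in>(\<lambda>y. (y, x)) ` A. tm u v) = (\<Sum>y\<in>A. tm y x)"
      by (subst sum.reindex) (auto intro: inj_onI)
    also have "\<dots> = (\<Sum>y\<in>A. tm x y)"
      by (intro sum.cong) (auto simp: A_def NB_def intro: tm_sym)
    finally show ?thesis .
  qed
  have "Q T = (\<Sum>(u, v)\<in>PS (T - {x}). tm u v) + (\<Sum>(u, v)\<in>Pair x ` A \<union> (\<lambda>y. (y, x)) ` A. tm u v)"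
    unfolding Q_def PSeq by (rule sum.union_disjoint) (use PS_fin fA d1 in auto)
  also have "(\<Sum>(u, v)\<in>Pair x ` A \<union> (\<lambda>y. (y, x)) ` A. tm u v)
      = (\<Sum>(u, v)\<in>Pair x ` A. tm u v) + (\<Sum>(u, v)\<in>(\<lambda>y. (y, x)) ` A. tm u v)"
    by (rule sum.union_disjoint) (use fA d2 in auto)
  also have "(\<Sum>(u, v)\<in>PS (T - {x}). tm u v) + ((\<Sum>(u, v)\<in>Pair x ` A. tm u v) + (\<Sum>(u, v)\<in>(\<lambda>y. (y, x)) ` A. tm u v))
      = Q (T - {x}) + 2 * (\<Sum>y\<in>A. tm x y)" unfolding s1 s2 Q_def by simp
  finally show ?thesis unfolding A_def .
qed

definition "cost x = 2 * (L * sqrt (real d) * (snd x)\<^sup>2 * real (a x) + beta x)"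

lemma cost_nn: "cost x \<ge> 0"
  unfolding cost_def using beta_nn L20 by simp

lemma peel:
  "finite T \<Longrightarrow> T \<subseteq> V \<Longrightarrow> \<exists>S\<subseteq>T. (\<forall>x\<in>S. cond S x) \<and> Q T - Q S \<le> (\<Sum>x\<in>T - S. cost x)"
proof (induction "card T" arbitrary: T rule: less_induct)
  case less
  show ?case
  proof (cases "\<forall>x\<in>T. cond T x")
    case True
    then show ?thesis by (intro exI[of _ T]) simp
  next
    case False
    then obtain x where xT: "x \<in> T" and nc: "\<not> cond T x" by auto
    define T' where "T' = T - {x}"
    have cT': "card T' < card T" using less.prems(1) xT unfolding T'_def by (rule card_Diff1_less)
    obtain S where S: "S \<subseteq> T'" "\<forall>x\<in>S. cond S x" "Q T' - Q S \<le> (\<Sum>x\<in>T' - S. cost x)"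
      using less.hyps[OF cT'] less.prems unfolding T'_def by auto
    have xV: "x \<in> V" using xT less.prems by auto
    have "Q T - Q T' \<le> cost x"
      using Q_split[OF xT] vertex[OF xV nc] unfolding T'_def cost_def by simp
    moreover have "T - S = insert x (T' - S)" using S(1) xT unfolding T'_def by auto
    moreover have "x \<notin> T' - S" unfolding T'_def by simp
    moreover have "finite (T' - S)" using less.prems(1) unfolding T'_def by simp
    ultimately have "Q T - Q S \<le> (\<Sum>x\<in>T - S. cost x)" using S(3) by simp
    moreover have "S \<subseteq> T" using S(1) unfolding T'_def by auto
    ultimately show ?thesis using S(2) by blast
  qed
qed

end

context P5 begin

lemma V_Gvert: "V \<subseteq> Gvert n h"
proof
  fix x assume "x \<in> V"
  then have "a x \<noteq> 0" by (simp add: V_def)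
  moreover have "\<forall>x. x \<notin> Gvert n h \<longrightarrow> a x = 0" using pat unfolding is_pattern_def by blast
  ultimately show "x \<in> Gvert n h" by meson
qed

lemma mass_le: "(\<Sum>x\<in>V. (snd x)\<^sup>2 * real (a x)) \<le> 10"
proof -
  have "(\<Sum>x | a x \<noteq> 0. (snd x)\<^sup>2 * real (a x)) \<le> 10" using pat unfolding is_pattern_def by blast
  then show ?thesis unfolding V_def .
qed

lemma ratio_sum:
  "(\<Sum>x\<in>{x\<in>V. LD x y}. snd y / snd x) \<le> real d * (2 * sqrt (real d))"
proof (cases "{x\<in>V. LD x y} = {}")
  case True then show ?thesis unfolding True by simp
next
  case False
  then obtain x0 where x0: "LD x0 y" by auto
  note b0 = LD_basic[OF x0]
  define X where "X = {x\<in>V. LD x y}"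
  have fX: "finite X" unfolding X_def using V_fin by simp
  define I where "I = fst ` X"
  have yG: "y \<in> Gvert n h" using b0(6) .
  then have fy: "fst y \<in> {1..h}" and vD: "snd y \<in> Dpos n h" by (auto simp: Gvert_def)
  have cardN: "card {i. Hadj (fst y) i} = d" using reg fy unfolding regular_graph_def by blast
  have finN: "finite {i. Hadj (fst y) i}" using cardN d2 by (metis card.infinite not_numeral_le_zero)
  have IN: "I \<subseteq> {i. Hadj (fst y) i}"
  proof
    fix i assume "i \<in> I"
    then obtain x where "x \<in> X" "i = fst x" unfolding I_def by auto
    then have "Hadj (fst x) (fst y)" using LD_basic(12) unfolding X_def by auto
    then show "i \<in> {i. Hadj (fst y) i}" using reg \<open>i = fst x\<close> unfolding regular_graph_def by auto
  qed
  have cI: "card I \<le> d" using card_mono[OF finN IN] cardN by simp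
  have inner: "(\<Sum>x\<in>{x\<in>X. fst x = i}. snd y / snd x) \<le> 2 * sqrt (real d)" for i
  proof -
    define Xi where "Xi = {x\<in>X. fst x = i}"
    have fXi: "finite Xi" using fX unfolding Xi_def by simp
    have inj: "inj_on snd Xi" unfolding Xi_def by (intro inj_onI) (auto simp: prod_eq_iff)
    have "(\<Sum>x\<in>Xi. snd y / snd x) = (\<Sum>w\<in>snd ` Xi. snd y / w)"
      using inj by (simp add: sum.reindex)
    also have "\<dots> \<le> 2 * sqrt (real d)"
    proof (rule Dpos_ratio_sum[OF b0(3) b0(4)])
      show "finite (snd ` Xi)" using fXi by simp
      show "snd ` Xi \<subseteq> Dpos n h"
      proof
        fix w assume "w \<in> snd ` Xi"
        then obtain x where "x \<in> X" "w = snd x" unfolding Xi_def by auto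
        then have "LD x y" unfolding X_def by simp
        then have "x \<in> Gvert n h" by (rule LD_basic(5))
        then show "w \<in> Dpos n h" using \<open>w = snd x\<close> by (auto simp: Gvert_def)
      qed
      show "snd y \<in> Dpos n h" using vD .
      show "\<forall>w\<in>snd ` Xi. snd y / w < sqrt (real d)"
        unfolding Xi_def X_def using LD_basic(13) by auto
    qed
    finally show ?thesis unfolding Xi_def .
  qed
  have "(\<Sum>x\<in>X. snd y / snd x) = (\<Sum>i\<in>I. \<Sum>x\<in>{x\<in>X. fst x = i}. snd y / snd x)"
    unfolding I_def using fX by (rule sum.image_gen)
  also have "\<dots> \<le> (\<Sum>i\<in>I. 2 * sqrt (real d))" by (intro sum_mono inner)
  also have "\<dots> = real (card I) * (2 * sqrt (real d))" by simp
  also have "\<dots> \<le> real d * (2 * sqrt (real d))" using cI by (intro mult_right_mono) auto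
  finally show ?thesis unfolding X_def .
qed

lemma beta_sum: "(\<Sum>x\<in>V. beta x) \<le> 40 * exp 1 * sqrt (real d)"
proof -
  define f where "f x y = (if LD x y then BB x y else 0)" for x y
  have NBV: "NB x = {y\<in>V. LD x y}" for x unfolding NB_def by (blast dest: LD_V)
  have bx: "beta x = (\<Sum>y\<in>V. f x y)" for x
    unfolding beta_def NBV f_def using V_fin by (rule sum.inter_filter)
  have "(\<Sum>x\<in>V. beta x) = (\<Sum>x\<in>V. \<Sum>y\<in>V. f x y)" using bx by simp
  also have "\<dots> = (\<Sum>y\<in>V. \<Sum>x\<in>V. f x y)" by (rule sum.swap)
  also have "\<dots> \<le> (\<Sum>y\<in>V. 4 * exp 1 * sqrt (real d) * ((snd y)\<^sup>2 * real (a y)))"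
  proof (intro sum_mono)
    fix y assume "y \<in> V"
    have dp: "real d > 0" using d2 by simp
    have "(\<Sum>x\<in>V. f x y) = (\<Sum>x\<in>{x\<in>V. LD x y}. BB x y)"
      unfolding f_def using V_fin by (simp add: sum.inter_filter)
    also have "\<dots> \<le> (\<Sum>x\<in>{x\<in>V. LD x y}. 2 * exp 1 * (snd y)\<^sup>2 * real (a y) / real d * (snd y / snd x))"
      by (intro sum_mono) (auto intro: edge(5)[THEN order_trans] simp: field_simps)
    also have "\<dots> = 2 * exp 1 * (snd y)\<^sup>2 * real (a y) / real d * (\<Sum>x\<in>{x\<in>V. LD x y}. snd y / snd x)"
      by (simp add: sum_distrib_left)
    also have "\<dots> \<le> 2 * exp 1 * (snd y)\<^sup>2 * real (a y) / real d * (real d * (2 * sqrt (real d)))"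
      by (intro mult_left_mono ratio_sum) auto
    also have "\<dots> = 4 * exp 1 * sqrt (real d) * ((snd y)\<^sup>2 * real (a y))" using dp by simp
    finally show "(\<Sum>x\<in>V. f x y) \<le> 4 * exp 1 * sqrt (real d) * ((snd y)\<^sup>2 * real (a y))" .
  qed
  also have "\<dots> = 4 * exp 1 * sqrt (real d) * (\<Sum>y\<in>V. (snd y)\<^sup>2 * real (a y))"
    by (simp add: sum_distrib_left)
  also have "\<dots> \<le> 4 * exp 1 * sqrt (real d) * 10" using mass_le by (intro mult_left_mono) auto
  finally show ?thesis by simp
qed

lemma e2big: "(exp (1::real))\<^sup>2 - 1 \<ge> 1"
proof -
  have "exp (1::real) \<ge> 2" using exp_ge_add_one_self[of 1] by simp
  then have "(exp (1::real))\<^sup>2 \<ge> 2\<^sup>2" by (intro power_mono) auto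
  then show ?thesis by simp
qed

lemma pLD_full: "pLD Hadj d n h a e = Q V / 2"
proof -
  have set: "{(x, y). LD x y} = PS V" unfolding PS_def using LD_V by auto
  have "(\<Sum>(x, y)\<in>{(x, y). LD x y}. snd x * snd y * real (a x) * real (a y) / real n * eps n a e x y) = Q V"
    unfolding set Q_def tm_def by simp
  then show ?thesis unfolding pLD_def using Q_nn by simp
qed

lemma LD_sub: "LDadj Hadj d n h (sub_a S a) (sub_e S e) x y \<longleftrightarrow> LD x y \<and> x \<in> S \<and> y \<in> S"
proof (cases "x \<in> S \<and> y \<in> S")
  case True
  then have "eps n (sub_a S a) (sub_e S e) x y = eps n a e x y"
    unfolding eps_def sub_a_def sub_e_def by simp
  then show ?thesis using True unfolding LDadj_def by simp
next
  case False
  then have "eps n (sub_a S a) (sub_e S e) x y = 1"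
    unfolding eps_def sub_a_def by auto
  then show ?thesis using False e2big unfolding LDadj_def by auto
qed

lemma pLD_sub: "pLD Hadj d n h (sub_a S a) (sub_e S e) = Q S / 2"
proof -
  have set: "{(x, y). LDadj Hadj d n h (sub_a S a) (sub_e S e) x y} = PS S"
    unfolding PS_def LD_sub by auto
  have "(\<Sum>(x, y)\<in>{(x, y). LDadj Hadj d n h (sub_a S a) (sub_e S e) x y}.
      snd x * snd y * real (sub_a S a x) * real (sub_a S a y) / real n * eps n (sub_a S a) (sub_e S e) x y) = Q S"
    unfolding set Q_def
  proof (intro sum.cong refl)
    fix p assume "p \<in> PS S"
    then obtain x y where p: "p = (x, y)" "x \<in> S" "y \<in> S" unfolding PS_def by auto
    then have "eps n (sub_a S a) (sub_e S e) x y = eps n a e x y"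
      unfolding eps_def sub_a_def sub_e_def by simp
    then show "(case p of (x, y) \<Rightarrow> snd x * snd y * real (sub_a S a x) * real (sub_a S a y) / real n *
             eps n (sub_a S a) (sub_e S e) x y) = (case p of (x, y) \<Rightarrow> tm x y)"
      using p unfolding tm_def sub_a_def by simp
  qed
  then show ?thesis unfolding pLD_def using Q_nn by simp
qed

lemma cost_sum: "(\<Sum>x\<in>V. cost x) \<le> 20 * L * sqrt (real d) + 80 * exp 1 * sqrt (real d)"
proof -
  have "(\<Sum>x\<in>V. cost x) = 2 * (L * sqrt (real d)) * (\<Sum>x\<in>V. (snd x)\<^sup>2 * real (a x)) + 2 * (\<Sum>x\<in>V. beta x)"
    unfolding cost_def by (simp add: sum.distrib sum_distrib_left algebra_simps)
  also have "\<dots> \<le> 2 * (L * sqrt (real d)) * 10 + 2 * (40 * exp 1 * sqrt (real d))"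
    using mass_le beta_sum L20 by (intro add_mono mult_left_mono) auto
  finally show ?thesis by simp
qed

lemma main:
  "\<exists>S \<subseteq> Gvert n h.
     pLD Hadj d n h (sub_a S a) (sub_e S e) \<ge> pLD Hadj d n h a e - 30 * L * sqrt (real d) \<and>
     (\<forall>x \<in> S.
        (\<Sum>y \<in> {y. LDadj Hadj d n h a e x y} \<inter> S.
           real (a x) * real (a y) / real n * (1 + eps n a e x y / 2) * ln (1 + eps n a e x y))
        \<ge> (if a x = 0 then 0 else L / 4 * real (a x) * ln (exp 1 * real n / real (a x))))"
proof -
  obtain S where S: "S \<subseteq> V" "\<forall>x\<in>S. cond S x" "Q V - Q S \<le> (\<Sum>x\<in>V - S. cost x)"
    using peel[OF V_fin subset_refl] by blast
  have "(\<Sum>x\<in>V - S. cost x) \<le> (\<Sum>x\<in>V. cost x)"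
    using V_fin cost_nn by (intro sum_mono2) auto
  also have "\<dots> \<le> 20 * L * sqrt (real d) + 80 * exp 1 * sqrt (real d)" by (rule cost_sum)
  also have "\<dots> \<le> 60 * L * sqrt (real d)"
  proof -
    have "exp (1::real) \<le> 3" using exp_le by simp
    then have "80 * exp 1 \<le> 40 * L" using L20 by simp
    then have "80 * exp 1 * sqrt (real d) \<le> 40 * L * sqrt (real d)" by (intro mult_right_mono) auto
    then show ?thesis by simp
  qed
  finally have loss: "Q V - Q S \<le> 60 * L * sqrt (real d)" using S(3) by simp
  have ineq: "pLD Hadj d n h (sub_a S a) (sub_e S e) \<ge> pLD Hadj d n h a e - 30 * L * sqrt (real d)"
    unfolding pLD_sub pLD_full using loss by simp
  have cond': "\<forall>x \<in> S.
        (\<Sum>y \<in> {y. LDadj Hadj d n h a e x y} \<inter> S.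
           real (a x) * real (a y) / real n * (1 + eps n a e x y / 2) * ln (1 + eps n a e x y))
        \<ge> (if a x = 0 then 0 else L / 4 * real (a x) * ln (exp 1 * real n / real (a x)))"
    using S(2) unfolding cond_def NB_def gg_def rhs_def by simp
  have "S \<subseteq> Gvert n h" using S(1) V_Gvert by auto
  then show ?thesis using ineq cond' by blast
qed

end

theorem proposition5p2:
  fixes Hadj :: "nat \<Rightarrow> nat \<Rightarrow> bool" and d n h :: nat and L :: real
    and a :: "vtx \<Rightarrow> nat" and e :: "vtx \<Rightarrow> vtx \<Rightarrow> nat"
  assumes "d \<ge> 2"
    and "regular_graph Hadj h d"
    and "L \<ge> 20"
    and "is_pattern Hadj d n h a e"
  shows "\<exists>S \<subseteq> Gvert n h.
     pLD Hadj d n h (sub_a S a) (sub_e S e) \<ge> pLD Hadj d n h a e - 30 * L * sqrt (real d) \<and>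
     (\<forall>x \<in> S.
        (\<Sum>y \<in> {y. LDadj Hadj d n h a e x y} \<inter> S.
           real (a x) * real (a y) / real n * (1 + eps n a e x y / 2) * ln (1 + eps n a e x y))
        \<ge> (if a x = 0 then 0 else L / 4 * real (a x) * ln (exp 1 * real n / real (a x))))"
proof -
  interpret P5 Hadj d n h L a e using assms by unfold_locales
  show ?thesis by (rule main)
qed

end
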